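(* Let $d\ge2$, $s\in\mathbb N$, $\beta>-d-s$, $\lambda_0,\dots,\lambda_{s-1}>0$, and let $f$ be a function on an open neighbourhood of $\mathbb V_0^{d+1}$ in $\mathbb R^{d+1}$ with continuous partial derivatives $\partial_t^kf$, $0\le k\le s$, and $\partial_t^sf\in L^2(\mathbb V_0^{d+1},\mathsf w_{\beta+s,0})$. Then for all $n\ge s$, $$\partial_t^s\operatorname{proj}_n^{\beta,-s}f(x,t)=\operatorname{proj}_{n-s}^{\beta+s,0}\big(\partial_t^sf\big)(x,t).$$
   Context: Cone $\mathbb V_0^{d+1}=\{(x,t)\in\mathbb R^d\times\mathbb R:\|x\|=t,\ 0\le t\le1\}$, points $(t\xi,t)$ with $\xi\in\mathbb S^{d-1}$; $\int_{\mathbb V_0^{d+1}}f\,\mathrm d\mathsf m=\int_0^1t^{d-1}\int_{\mathbb S^{d-1}}f(t\xi,t)\mathrm d\sigma(\xi)\mathrm dt$; $\omega_d=2\pi^{d/2}/\Gamma(d/2)$; $\mathsf w_{\beta,\gamma}(t)=t^\beta(1-t)^\gamma$. $\partial_t$ is the partial derivative in the last variable with $x$ held fixed. Jacobi polynomials for real parameters: $P_n^{(\alpha,\beta)}(u)=\sum_{k=0}^n\frac{(\alpha+k+1)_{n-k}(-n)_k(n+\alpha+\beta+1)_k}{n!\,k!}(\frac{1-u}{2})^k$; $A_n^{(\alpha,\beta)}=2^n/(n+\alpha+\beta+1)_n$; $\widehat P_n^{(\alpha,\beta)}=A_n^{(\alpha,\beta)}P_n^{(\alpha,\beta)}$; for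 $\alpha>-1-s$, $J_n^{(\alpha,-s)}(u)=\frac{(u+1)^n}{n!}$ ($n\le s-1$), $J_n^{(\alpha,-s)}(u)=\int_{-1}^u\frac{(u-w)^{s-1}}{(s-1)!}\widehat P_{n-s}^{(\alpha+s,0)}(w)\mathrm dw$ ($n\ge s$). $\{Y_\ell^m\}$ orthonormal basis of degree-$m$ spherical harmonics for $\frac1{\omega_d}\int\cdot\,\mathrm d\sigma$, extended homogeneously to harmonic polynomials on $\mathbb R^d$. $\langle f,g\rangle_{\beta',\gamma}=b_{\beta',\gamma}\int_{\mathbb V_0^{d+1}}fg\,\mathsf w_{\beta',\gamma}\mathrm d\mathsf m$ ($\beta'>-d,\gamma>-1$, $b$ normalizing $\langle1,1\rangle=1$); $\mathsf S_{m,\ell}^{n,(\beta',\gamma)}(x,t)=P_{n-m}^{(2m+\beta'+d-1,\gamma)}(1-2t)Y_\ell^m(x)$; $\operatorname{proj}_n^{\beta',\gamma}g=\sum_{m\le n,\ell}\frac{\langle g,\mathsf S_{m,\ell}^{n,(\beta',\gamma)}\rangle_{\beta',\gamma}}{\langle\mathsf S_{m,\ell}^{n,(\beta',\gamma)},\mathsf S_{m,\ell}^{n,(\beta',\gamma)}\rangle_{\beta',\gamma}}\mathsf S_{m,\ell}^{n,(\beta',\gamma)}$ as a polynomial in $(x,t)$. $\langle f,g\rangle_{\beta,-s}=\frac1{\omega_d}\int_{\mathbb V_0^{d+1}}\partial_t^sf\,\partial_t^sg\,t^{\beta+s}\mathrm d\mathsf m+\sum_{k=0}^{s-1}\frac{\lambda_k}{\omega_d}\int_{\mathbb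 S^{d-1}}\partial_t^kf(\xi,1)\partial_t^kg(\xi,1)\mathrm d\sigma(\xi)$; $\mathsf S_{m,\ell}^{n,(\beta,-s)}(x,t)=J_{n-m}^{(2m+\beta+d-1,-s)}(1-2t)Y_\ell^m(x)$; $\operatorname{proj}_n^{\beta,-s}f=\sum_{m\le n,\ell}\frac{\langle f,\mathsf S_{m,\ell}^{n,(\beta,-s)}\rangle_{\beta,-s}}{\langle\mathsf S_{m,\ell}^{n,(\beta,-s)},\mathsf S_{m,\ell}^{n,(\beta,-s)}\rangle_{\beta,-s}}\mathsf S_{m,\ell}^{n,(\beta,-s)}$, a polynomial in $(x,t)$. *)

theory Defs
  imports "HOL-Analysis.Analysis"
begin

text \<open>Points of R^(d+1) are pairs (x,t) with x :: real^'d, d = CARD('d).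
  Functions on R^(d+1) are curried: f :: real^'d => real => real.\<close>

definition cone :: "((real^'d::finite) \<times> real) set" where
  "cone = {(x, t). norm x = t \<and> 0 \<le> t \<and> t \<le> 1}"

definition omega_d :: "'d::finite itself \<Rightarrow> real" where
  "omega_d _ = 2 * pi powr (real CARD('d) / 2) / Gamma (real CARD('d) / 2)"

text \<open>Surface integral over the unit sphere S^(d-1) (w.r.t. surface measure sigma),
  via polar coordinates: int_S g dsigma = d * int_{unit ball} g(x/|x|) dx.\<close>
definition sphere_int :: "(real^'d::finite \<Rightarrow> real) \<Rightarrow> real" where
  "sphere_int g = real CARD('d) *
     set_lebesgue_integral lborel (cball 0 1) (\<lambda>x. g (x /\<^sub>R norm x))"

text \<open>Integral over the cone w.r.t. dm: int_0^1 t^(d-1) int_S F(t xi, t) dsigma dt,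
  which by polar coordinates equals int_{unit ball} F(y, |y|) dy.\<close>
definition cone_int :: "(real^'d::finite \<Rightarrow> real \<Rightarrow> real) \<Rightarrow> real" where
  "cone_int F = set_lebesgue_integral lborel (cball 0 1) (\<lambda>y. F y (norm y))"

definition dt :: "nat \<Rightarrow> (real^'d \<Rightarrow> real \<Rightarrow> real) \<Rightarrow> real^'d \<Rightarrow> real \<Rightarrow> real" where
  "dt k f x = (deriv ^^ k) (f x)"

definition hom_poly :: "nat \<Rightarrow> (real^'d::finite \<Rightarrow> real) \<Rightarrow> bool" where
  "hom_poly m p \<longleftrightarrow> (\<exists>c :: ('d \<Rightarrow> nat) \<Rightarrow> real. \<forall>x.
      p x = (\<Sum>\<alpha>\<in>{\<alpha>. sum \<alpha> UNIV = m}. c \<alpha> * (\<Prod>i\<in>UNIV. (x $ i) ^ \<alpha> i)))"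

definition harmonic :: "(real^'d::finite \<Rightarrow> real) \<Rightarrow> bool" where
  "harmonic p \<longleftrightarrow> (\<forall>x. (\<Sum>i\<in>UNIV.
      deriv (\<lambda>u. deriv (\<lambda>v. p (x + v *\<^sub>R axis i 1)) u) 0) = 0)"

text \<open>Y m l, l < N m, is an orthonormal basis (for (1/omega_d) int_S . dsigma) of the
  space of harmonic homogeneous polynomials of degree m (spherical harmonics,
  extended homogeneously).\<close>
definition sph_harm_basis :: "(nat \<Rightarrow> nat) \<Rightarrow> (nat \<Rightarrow> nat \<Rightarrow> real^'d::finite \<Rightarrow> real) \<Rightarrow> bool" where
  "sph_harm_basis N Y \<longleftrightarrow> (\<forall>m.
     (\<forall>l < N m. hom_poly m (Y m l) \<and> harmonic (Y m l)) \<and>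
     (\<forall>l < N m. \<forall>l' < N m.
        sphere_int (\<lambda>\<xi>. Y m l \<xi> * Y m l' \<xi>) / omega_d TYPE('d) = (if l = l' then 1 else 0)) \<and>
     (\<forall>p. hom_poly m p \<and> harmonic p \<longrightarrow>
        (\<exists>a. \<forall>x. p x = (\<Sum>l<N m. a l * Y m l x))))"

definition jacobiP :: "nat \<Rightarrow> real \<Rightarrow> real \<Rightarrow> real \<Rightarrow> real" where
  "jacobiP n a b u = (\<Sum>k = 0..n.
     pochhammer (a + real k + 1) (n - k) * pochhammer (- real n) k
       * pochhammer (real n + a + b + 1) k / (fact n * fact k) * ((1 - u) / 2) ^ k)"

definition jacobiA :: "nat \<Rightarrow> real \<Rightarrow> real \<Rightarrow> real" where
  "jacobiA n a b = 2 ^ n / pochhammer (real n + a + b + 1) n"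

definition jacobiP_hat :: "nat \<Rightarrow> real \<Rightarrow> real \<Rightarrow> real \<Rightarrow> real" where
  "jacobiP_hat n a b u = jacobiA n a b * jacobiP n a b u"

definition jacobiJ :: "nat \<Rightarrow> real \<Rightarrow> nat \<Rightarrow> real \<Rightarrow> real" where
  "jacobiJ n a s u = (if n \<le> s - 1 then (u + 1) ^ n / fact n
     else interval_lebesgue_integral lborel (ereal (-1)) (ereal u)
       (\<lambda>w. (u - w) ^ (s - 1) / fact (s - 1) * jacobiP_hat (n - s) (a + real s) 0 w))"

definition wcone :: "real \<Rightarrow> real \<Rightarrow> real \<Rightarrow> real" where
  "wcone b g t = t powr b * (1 - t) powr g"

definition w_ip :: "real \<Rightarrow> real \<Rightarrow> (real^'d::finite \<Rightarrow> real \<Rightarrow> real)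
    \<Rightarrow> (real^'d \<Rightarrow> real \<Rightarrow> real) \<Rightarrow> real" where
  "w_ip b g f h = (1 / cone_int (\<lambda>(y::real^'d) t. wcone b g t)) *
      cone_int (\<lambda>y t. f y t * h y t * wcone b g t)"

definition S_w :: "(nat \<Rightarrow> nat \<Rightarrow> real^'d::finite \<Rightarrow> real) \<Rightarrow> real \<Rightarrow> real
    \<Rightarrow> nat \<Rightarrow> nat \<Rightarrow> nat \<Rightarrow> real^'d \<Rightarrow> real \<Rightarrow> real" where
  "S_w Y b g n m l x t =
     jacobiP (n - m) (2 * real m + b + real CARD('d) - 1) g (1 - 2 * t) * Y m l x"

definition proj_w :: "(nat \<Rightarrow> nat) \<Rightarrow> (nat \<Rightarrow> nat \<Rightarrow> real^'d::finite \<Rightarrow> real) \<Rightarrow> real \<Rightarrow> real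
    \<Rightarrow> nat \<Rightarrow> (real^'d \<Rightarrow> real \<Rightarrow> real) \<Rightarrow> real^'d \<Rightarrow> real \<Rightarrow> real" where
  "proj_w N Y b g n f x t = (\<Sum>m\<le>n. \<Sum>l<N m.
     w_ip b g f (S_w Y b g n m l) / w_ip b g (S_w Y b g n m l) (S_w Y b g n m l)
       * S_w Y b g n m l x t)"

definition sob_ip :: "real \<Rightarrow> nat \<Rightarrow> (nat \<Rightarrow> real) \<Rightarrow> (real^'d::finite \<Rightarrow> real \<Rightarrow> real)
    \<Rightarrow> (real^'d \<Rightarrow> real \<Rightarrow> real) \<Rightarrow> real" where
  "sob_ip \<beta> s lam f h =
     1 / omega_d TYPE('d) * cone_int (\<lambda>y t. dt s f y t * dt s h y t * t powr (\<beta> + real s))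
     + (\<Sum>k<s. lam k / omega_d TYPE('d) * sphere_int (\<lambda>\<xi>. dt k f \<xi> 1 * dt k h \<xi> 1))"

definition S_sob :: "(nat \<Rightarrow> nat \<Rightarrow> real^'d::finite \<Rightarrow> real) \<Rightarrow> real \<Rightarrow> nat
    \<Rightarrow> nat \<Rightarrow> nat \<Rightarrow> nat \<Rightarrow> real^'d \<Rightarrow> real \<Rightarrow> real" where
  "S_sob Y \<beta> s n m l x t =
     jacobiJ (n - m) (2 * real m + \<beta> + real CARD('d) - 1) s (1 - 2 * t) * Y m l x"

definition proj_sob :: "(nat \<Rightarrow> nat) \<Rightarrow> (nat \<Rightarrow> nat \<Rightarrow> real^'d::finite \<Rightarrow> real) \<Rightarrow> real \<Rightarrow> nat
    \<Rightarrow> (nat \<Rightarrow> real) \<Rightarrow> nat \<Rightarrow> (real^'d \<Rightarrow> real \<Rightarrow> real) \<Rightarrow> real^'d \<Rightarrow> real \<Rightarrow> real" where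
  "proj_sob N Y \<beta> s lam n f x t = (\<Sum>m\<le>n. \<Sum>l<N m.
     sob_ip \<beta> s lam f (S_sob Y \<beta> s n m l)
       / sob_ip \<beta> s lam (S_sob Y \<beta> s n m l) (S_sob Y \<beta> s n m l)
       * S_sob Y \<beta> s n m l x t)"

end

theory Submission
  imports Defs "HOL-Analysis.Analysis"
begin


definition antider :: "(real \<Rightarrow> real) \<Rightarrow> real \<Rightarrow> real" where
  "antider g u = interval_lebesgue_integral lborel (ereal (-1)) (ereal u) g"

lemma antider_deriv:
  assumes "continuous_on UNIV g"
  shows "(antider g has_real_derivative g u) (at u)"
proof -
  define a where "a = min (-1) u - 1"
  define b where "b = max (-1) u + 1"
  have "((\<lambda>u. interval_lebesgue_integral lborel (ereal (-1)) (ereal u) (\<lambda>y. g y)) has_vector_derivative (g u)) (at u within {a..b})"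
  proof (rule interval_integral_FTC2[of a "-1" b g u])
    have "min (-1) u \<le> -1" "min (-1) u \<le> u" "-1 \<le> max (-1) u" "u \<le> max (-1) u" by simp_all
    then show "a \<le> -1" "-1 \<le> b" "a \<le> u" "u \<le> b" unfolding a_def b_def by linarith+
    show "continuous_on {a..b} g" using assms by (rule continuous_on_subset) simp
  qed
  moreover have "u \<in> interior {a..b}"
    using min.cobounded2[of "-1" u] max.cobounded2[of "-1" u] unfolding a_def b_def interior_atLeastAtMost_real
    by (simp only: greaterThanLessThan_iff) linarith
  ultimately have "((\<lambda>u. interval_lebesgue_integral lborel (ereal (-1)) (ereal u) (\<lambda>y. g y)) has_vector_derivative (g u)) (at u)"
    by (simp only: at_within_interior)
  then show ?thesis
    unfolding antider_def has_real_derivative_iff_has_vector_derivative by simp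
qed

lemma antider_cont: "continuous_on UNIV g \<Longrightarrow> continuous_on UNIV (antider g)"
  by (intro continuous_at_imp_continuous_on ballI) (rule DERIV_isCont[OF antider_deriv])

lemma antider_m1 [simp]: "antider g (-1) = 0"
  by (simp add: antider_def)

lemma antider_pow_cont: "continuous_on UNIV g \<Longrightarrow> continuous_on UNIV ((antider ^^ k) g)"
  by (induction k) (auto intro: antider_cont)

lemma cont_intint: "continuous_on UNIV (f::real\<Rightarrow>real) \<Longrightarrow> interval_lebesgue_integrable lborel (ereal a) (ereal b) f"
  by (rule interval_integrable_isCont) (simp add: continuous_on_eq_continuous_at)

lemma cauchy_formula:
  assumes "continuous_on UNIV g"
  shows "interval_lebesgue_integral lborel (ereal (-1)) (ereal u)
          (\<lambda>w. (u - w) ^ k / fact k * g w) = (antider ^^ Suc k) g u"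
  using assms
proof (induction k arbitrary: g)
  case 0
  then show ?case by (simp add: antider_def)
next
  case (Suc k)
  have cG: "continuous_on UNIV (antider g)" using Suc.prems by (rule antider_cont)
  have sw: "(antider ^^ Suc k) (antider g) = (antider ^^ Suc (Suc k)) g"
    by (metis funpow_Suc_right comp_apply)
  have IH: "interval_lebesgue_integral lborel (ereal (-1)) (ereal u) (\<lambda>w. (u - w) ^ k / fact k * antider g w) = (antider ^^ Suc (Suc k)) g u"
    using Suc.IH[OF cG] sw by simp
  define F where "F w = (u - w) ^ Suc k / fact (Suc k) * antider g w" for w
  define h where "h w = (u - w) ^ Suc k / fact (Suc k) * g w - (u - w) ^ k / fact k * antider g w" for w
  have dF: "(F has_real_derivative h w) (at w)" for w
  proof -
    have "((\<lambda>w. (u - w) ^ Suc k) has_real_derivative (real (Suc k) * (u - w) ^ k * (0 - 1))) (at w)"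
      by (rule derivative_eq_intros refl)+ simp
    then have "((\<lambda>w. (u - w) ^ Suc k / fact (Suc k)) has_real_derivative (real (Suc k) * (u - w) ^ k * (0 - 1)) / fact (Suc k)) (at w)"
      by (rule DERIV_cdivide)
    moreover have "(real (Suc k) * (u - w) ^ k * (0 - 1)) / fact (Suc k) = - ((u - w) ^ k / fact k)"
      by (simp add: fact_Suc del: of_nat_Suc)
    ultimately have "((\<lambda>w. (u - w) ^ Suc k / fact (Suc k)) has_real_derivative - ((u - w) ^ k / fact k)) (at w)"
      by simp
    from DERIV_mult[OF this antider_deriv[OF Suc.prems]]
    show ?thesis unfolding F_def
      by (rule DERIV_cong) (simp add: h_def mult.commute)
  qed
  have ch: "continuous_on UNIV h" unfolding h_def
    by (intro continuous_intros cG Suc.prems) auto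
  have "interval_lebesgue_integral lborel (ereal (-1)) (ereal u) h = F u - F (-1)"
  proof (rule interval_integral_FTC_finite)
    show "continuous_on {min (- 1) u..max (- 1) u} h" using ch by (rule continuous_on_subset) simp
    fix x show "(F has_vector_derivative h x) (at x within {min (- 1) u..max (- 1) u})"
      using dF[of x] unfolding has_real_derivative_iff_has_vector_derivative
      by (rule has_vector_derivative_at_within)
  qed
  also have "\<dots> = 0" by (simp add: F_def)
  finally have h0: "interval_lebesgue_integral lborel (ereal (-1)) (ereal u) h = 0" .
  have int1: "interval_lebesgue_integrable lborel (ereal (-1)) (ereal u) (\<lambda>w. (u - w) ^ Suc k / fact (Suc k) * g w)"
   and int2: "interval_lebesgue_integrable lborel (ereal (-1)) (ereal u) (\<lambda>w. (u - w) ^ k / fact k * antider g w)"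
    by (rule cont_intint; intro continuous_intros cG Suc.prems; simp)+
  have "interval_lebesgue_integral lborel (ereal (-1)) (ereal u) h = interval_lebesgue_integral lborel (ereal (-1)) (ereal u) (\<lambda>w. (u - w) ^ Suc k / fact (Suc k) * g w)
          - interval_lebesgue_integral lborel (ereal (-1)) (ereal u) (\<lambda>w. (u - w) ^ k / fact k * antider g w)"
    unfolding h_def using int1 int2 by (rule interval_lebesgue_integral_diff(2))
  then show ?case using h0 IH by simp
qed



lemma ennreal_le_suminf: "f i \<le> (\<Sum>i. f i :: ennreal)"
  using ennreal_suminf_lessD[of f "f i" i] by (metis less_irrefl not_le)

lemma shell_exists:
  fixes r :: real assumes "0 < r" "r \<le> 1"
  shows "\<exists>k. (1/2)^Suc k < r \<and> r \<le> (1/2)^k"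
proof -
  have ex: "\<exists>n. (1/2::real)^n < r" using real_arch_pow_inv[OF assms(1), of "1/2"] by simp
  define n where "n = (LEAST n. (1/2::real)^n < r)"
  have n1: "(1/2::real)^n < r" unfolding n_def by (rule LeastI_ex[OF ex])
  have "n \<noteq> 0"
  proof
    assume "n = 0" with n1 assms show False by simp
  qed
  then obtain k where k: "n = Suc k" by (cases n) auto
  have "\<not> (1/2::real)^k < r" unfolding n_def
    by (rule not_less_Least) (simp add: k n_def[symmetric])
  then show ?thesis using n1 k by (auto simp: not_less)
qed

lemma powr_ball_integrable:
  fixes p :: real
  assumes p: "p > - real CARD('d::finite)"
  shows "set_integrable lborel (cball (0::real^'d) 1) (\<lambda>y. norm y powr p)"
proof -
  define d where "d = CARD('d)"
  define V where "V = unit_ball_vol (real d)"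
  define A where "A k = cball (0::real^'d) ((1/2)^k) - cball 0 ((1/2)^Suc k)" for k
  define M where "M k = 2 powr \<bar>p\<bar> * (1/2) powr (real k * p)" for k
  define r where "r = (1/2::real) powr (p + real d)"
  have r0: "0 \<le> r" "r < 1"
    using p powr_less_mono'[of "1/2::real" 0 "p + real d"] by (auto simp: r_def d_def)
  have Ameas: "A k \<in> sets lborel" for k unfolding A_def by auto
  have bound: "norm y powr p \<le> M k" if "y \<in> A k" for y k
  proof -
    from that have y1: "(1/2)^Suc k < norm y" and y2: "norm y \<le> (1/2)^k" by (auto simp: A_def)
    have ypos: "0 < norm y" using y1 zero_less_power[of "1/2::real" "Suc k"] by linarith
    have e1: "((1/2::real)^k) powr p = (1/2) powr (real k * p)"
      by (simp add: powr_realpow[symmetric] powr_powr)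
    have e2: "((1/2::real)^Suc k) powr p = (1/2) powr (real k * p) * 2 powr (-p)"
      by (simp add: powr_realpow[symmetric] powr_powr powr_add algebra_simps powr_divide powr_minus_divide powr_mult)
    have h1: "1 \<le> (2::real) powr \<bar>p\<bar>" using powr_mono[of 0 "\<bar>p\<bar>" "2::real"] by simp
    have pp: "0 \<le> (1/2::real) powr (real k * p)" by simp
    show ?thesis
    proof (cases "p \<ge> 0")
      case True
      have "norm y powr p \<le> ((1/2)^k) powr p" by (rule powr_mono2) (use True ypos y2 in auto)
      also have "\<dots> \<le> M k" unfolding e1 M_def using mult_right_mono[OF h1 pp] by simp
      finally show ?thesis .
    next
      case False
      have "norm y powr p \<le> ((1/2)^Suc k) powr p" by (rule powr_mono2') (use False y1 in auto)
      also have "\<dots> = M k" unfolding e2 M_def using False by (simp add: mult.commute)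
      finally show ?thesis .
    qed
  qed
  have ptw: "ennreal (norm (indicator (cball 0 1) y *\<^sub>R norm y powr p))
      \<le> (\<Sum>k. ennreal (M k) * indicator (A k) y)" for y :: "real^'d"
  proof (cases "y \<in> cball 0 1 \<and> y \<noteq> 0")
    case True
    then obtain k where k: "(1/2)^Suc k < norm y" "norm y \<le> (1/2)^k"
      using shell_exists[of "norm y"] by auto
    then have yA: "y \<in> A k" by (auto simp: A_def)
    have "ennreal (norm (indicator (cball 0 1) y *\<^sub>R norm y powr p)) = ennreal (norm y powr p)"
      using True by simp
    also have "\<dots> \<le> ennreal (M k) * indicator (A k) y"
      using bound[OF yA] yA by (simp add: ennreal_leI)
    also have "\<dots> \<le> (\<Sum>k. ennreal (M k) * indicator (A k) y)" by (rule ennreal_le_suminf)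
    finally show ?thesis .
  next
    case False
    then have "indicator (cball 0 1) y *\<^sub>R norm y powr p = 0" by (auto simp: indicator_def)
    then show ?thesis by (metis norm_zero ennreal_0 zero_le)
  qed
  have "(\<integral>\<^sup>+y. ennreal (norm (indicator (cball (0::real^'d) 1) y *\<^sub>R norm y powr p)) \<partial>lborel)
        \<le> (\<integral>\<^sup>+y. (\<Sum>k. ennreal (M k) * indicator (A k) y) \<partial>lborel)"
    by (rule nn_integral_mono) (rule ptw)
  also have "\<dots> = (\<Sum>k. (\<integral>\<^sup>+y. ennreal (M k) * indicator (A k) y \<partial>lborel))"
    by (rule nn_integral_suminf) (use Ameas in auto)
  also have "\<dots> = (\<Sum>k. ennreal (M k) * emeasure lborel (A k))"
    by (intro arg_cong[where f=suminf] ext nn_integral_cmult_indicator Ameas)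
  also have "\<dots> \<le> (\<Sum>k. ennreal (M k * (V * ((1/2)^k)^d)))"
  proof (rule suminf_le)
    fix k
    have "emeasure lborel (A k) \<le> emeasure lborel (cball (0::real^'d) ((1/2)^k))"
      by (rule emeasure_mono) (auto simp: A_def)
    also have "\<dots> = ennreal (V * ((1/2)^k)^d)"
      by (simp add: emeasure_cball V_def d_def)
    finally show "ennreal (M k) * emeasure lborel (A k) \<le> ennreal (M k * (V * ((1/2)^k)^d))"
      by (simp add: ennreal_mult' M_def mult_left_mono)
  qed auto
  also have "\<dots> < \<infinity>"
  proof -
    have eq: "M k * (V * ((1/2)^k)^d) = (2 powr \<bar>p\<bar> * V) * r^k" for k
    proof -
      have "((1/2::real)^k)^d = (1/2) powr (real k * real d)"
        by (simp add: power_mult[symmetric] powr_realpow[symmetric] powr_powr)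
      moreover have "r^k = (1/2) powr (real k * p) * (1/2) powr (real k * real d)"
        by (simp add: r_def powr_realpow[symmetric] powr_powr powr_add[symmetric] algebra_simps)
      ultimately show ?thesis by (simp add: M_def)
    qed
    have "summable (\<lambda>k. (2 powr \<bar>p\<bar> * V) * r^k)"
      using r0 by (intro summable_mult summable_geometric) simp
    then have "(\<Sum>k. ennreal (M k * (V * ((1/2)^k)^d))) \<noteq> top"
      unfolding eq by (rule ennreal_suminf_neq_top) (use r0 in \<open>auto simp: V_def\<close>)
    then show ?thesis by (simp add: top.not_eq_extremum)
  qed
  finally have fin: "(\<integral>\<^sup>+y. ennreal (norm (indicator (cball (0::real^'d) 1) y *\<^sub>R norm y powr p)) \<partial>lborel) < \<infinity>" .
  show ?thesis unfolding set_integrable_def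
  proof (rule integrableI_bounded)
    show "(\<lambda>y. indicator (cball (0::real^'d) 1) y *\<^sub>R norm y powr p) \<in> borel_measurable lborel"
    proof (intro borel_measurable_scaleR borel_measurable_indicator powr_real_measurable)
      show "cball 0 1 \<in> sets lborel" by simp
      show "(\<lambda>x::real^'d. norm x) \<in> borel_measurable lborel"
        using borel_measurable_norm by (simp add: measurable_lborel1)
    qed simp
  qed (use fin in auto)
qed



lemma norm_meas: "(\<lambda>x::'a::euclidean_space. norm x) \<in> borel_measurable lborel"
  using borel_measurable_norm by (simp add: measurable_lborel1)

lemma wcone_meas: "(\<lambda>y::'a::euclidean_space. wcone p q (norm y)) \<in> borel_measurable lborel"
  unfolding wcone_def
  by (intro borel_measurable_times powr_real_measurable norm_meas borel_measurable_diff) auto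

lemma sphere_null: "sphere (0::'a::euclidean_space) 1 \<in> null_sets lborel"
  using negligible_sphere[of "0::'a" 1]
  by (auto simp: null_sets_completion_iff negligible_iff_null_sets negligible_convex_frontier)

lemma AE_not_sphere: "AE y in lborel. norm (y::'a::euclidean_space) \<noteq> 1"
  by (rule AE_I'[OF sphere_null]) auto

lemma cone_int_wcone:
  fixes F :: "real^'d::finite \<Rightarrow> real \<Rightarrow> real"
  assumes cF: "continuous_on (cball 0 1) (\<lambda>y. F y (norm y))"
  shows "cone_int (\<lambda>y t. F y t * wcone p 0 t) = cone_int (\<lambda>y t. F y t * t powr p)"
  unfolding cone_int_def set_lebesgue_integral_def
proof (rule integral_cong_AE)
  have m1: "(\<lambda>y. indicator (cball (0::real^'d) 1) y *\<^sub>R F y (norm y)) \<in> borel_measurable lborel"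
    using borel_measurable_continuous_on_indicator[OF _ cF] by (simp add: measurable_lborel1)
  have "(\<lambda>y. (indicator (cball (0::real^'d) 1) y *\<^sub>R F y (norm y)) * wcone p 0 (norm y)) \<in> borel_measurable lborel"
    by (intro borel_measurable_times m1 wcone_meas)
  then show "(\<lambda>y. indicator (cball (0::real^'d) 1) y *\<^sub>R (F y (norm y) * wcone p 0 (norm y))) \<in> borel_measurable lborel"
    by (simp add: mult.assoc)
  have "(\<lambda>y. (indicator (cball (0::real^'d) 1) y *\<^sub>R F y (norm y)) * norm y powr p) \<in> borel_measurable lborel"
    by (intro borel_measurable_times m1 powr_real_measurable norm_meas) auto
  then show "(\<lambda>y. indicator (cball (0::real^'d) 1) y *\<^sub>R (F y (norm y) * norm y powr p)) \<in> borel_measurable lborel"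
    by (simp add: mult.assoc)
  show "AE y in lborel. indicator (cball (0::real^'d) 1) y *\<^sub>R (F y (norm y) * wcone p 0 (norm y)) =
          indicator (cball 0 1) y *\<^sub>R (F y (norm y) * norm y powr p)"
    using AE_not_sphere
  proof (rule AE_mp, intro AE_I2 impI)
    fix y :: "real^'d" assume "norm y \<noteq> 1"
    then show "indicator (cball (0::real^'d) 1) y *\<^sub>R (F y (norm y) * wcone p 0 (norm y)) =
          indicator (cball 0 1) y *\<^sub>R (F y (norm y) * norm y powr p)"
      by (cases "y \<in> cball 0 1") (auto simp: wcone_def)
  qed
qed

lemma C_nonzero:
  assumes p: "p > - real CARD('d::finite)"
  shows "cone_int (\<lambda>(y::real^'d) t. wcone p 0 t) \<noteq> 0"
proof
  define h where "h y = indicator (cball (0::real^'d) 1) y *\<^sub>R wcone p 0 (norm y)" for y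
  have int0: "integrable lborel (\<lambda>y. indicator (cball (0::real^'d) 1) y *\<^sub>R norm y powr p)"
    using powr_ball_integrable[OF p] unfolding set_integrable_def .
  have hm: "h \<in> borel_measurable lborel" unfolding h_def
    by (intro borel_measurable_scaleR borel_measurable_indicator wcone_meas) simp
  have hint: "integrable lborel h"
  proof (rule Bochner_Integration.integrable_bound[OF int0 hm], intro AE_I2)
    fix y :: "real^'d"
    have "(1 - norm y) powr 0 \<le> 1" by (simp add: powr_def)
    then show "norm (h y) \<le> norm (indicator (cball (0::real^'d) 1) y *\<^sub>R norm y powr p)"
      by (auto simp: h_def wcone_def indicator_def)
  qed
  assume "cone_int (\<lambda>(y::real^'d) t. wcone p 0 t) = 0"
  then have "integral\<^sup>L lborel h = 0"
    unfolding h_def by (simp add: cone_int_def set_lebesgue_integral_def)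
  then have "AE y in lborel. h y = 0"
    by (subst (asm) integral_nonneg_eq_0_iff_AE[OF hint]) (auto simp: h_def wcone_def indicator_def)
  then obtain N where N: "{y \<in> space lborel. \<not> h y = 0} \<subseteq> N" "N \<in> null_sets lborel"
    by (rule AE_E) (auto simp: null_sets_def)
  obtain c :: "real^'d" where c: "norm c = 1/2" using vector_choose_size[of "1/2"] by auto
  have sub: "ball c (1/4) \<subseteq> N"
  proof
    fix y assume y: "y \<in> ball c (1/4)"
    then have "dist c y < 1/4" by simp
    then have "norm (c - y) < 1/4" by (simp add: dist_norm)
    moreover have "norm c - norm (c - y) \<le> norm y" "norm y \<le> norm c + norm (c - y)"
      using norm_triangle_ineq2[of c "c - y"] norm_triangle_ineq4[of c "c - y"] by auto
    ultimately have y1: "0 < norm y" "norm y < 1" using c by linarith+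
    then have "h y = norm y powr p" by (simp add: h_def wcone_def)
    then have "h y \<noteq> 0" using y1 by simp
    then show "y \<in> N" using N(1) by auto
  qed
  have "emeasure lborel (ball c (1/4)) \<le> emeasure lborel N"
    by (rule emeasure_mono[OF sub]) (use N in auto)
  also have "\<dots> = 0" using N by auto
  finally have "emeasure lborel (ball c (1/4)) = 0" by simp
  moreover have "emeasure lborel (ball c (1/4)) > 0"
    by (simp add: emeasure_ball)
  ultimately show False by simp
qed



lemma deriv_seq:
  assumes "\<forall>j<k. \<forall>t. (D j has_real_derivative D (Suc j) t) (at t)"
  shows "(deriv ^^ k) (D 0) = D k"
  using assms
proof (induction k)
  case 0 then show ?case by simp
next
  case (Suc k)
  then have IH: "(deriv ^^ k) (D 0) = D k" by simp
  have "(deriv ^^ Suc k) (D 0) = deriv (D k)" by (simp add: IH)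
  also have "\<dots> = D (Suc k)"
    using Suc.prems by (intro ext DERIV_imp_deriv) auto
  finally show ?case .
qed

lemma jacobiP_hat_cont: "continuous_on UNIV (jacobiP_hat n a b)"
  unfolding jacobiP_hat_def[abs_def] jacobiP_def by (intro continuous_intros) auto

definition Ef :: "(nat \<Rightarrow> nat \<Rightarrow> real^'d::finite \<Rightarrow> real) \<Rightarrow> real \<Rightarrow> nat \<Rightarrow> nat \<Rightarrow> nat \<Rightarrow> nat
   \<Rightarrow> real^'d \<Rightarrow> nat \<Rightarrow> real \<Rightarrow> real" where
 "Ef Y \<beta> s n m l x j t = (if m + s \<le> n then (-2)^j * (antider^^(s-j))
      (jacobiP_hat (n - m - s) (2 * real m + \<beta> + real CARD('d) - 1 + real s) 0) (1 - 2*t) * Y m l x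
   else (-2)^j * (if j \<le> n - m then (1 - 2*t + 1)^(n-m-j)/fact(n-m-j) else 0) * Y m l x)"

lemma E0:
  fixes Y :: "nat \<Rightarrow> nat \<Rightarrow> real^'d::finite \<Rightarrow> real"
  assumes s: "s \<ge> 1"
  shows "Ef Y \<beta> s n m l x 0 t = S_sob Y \<beta> s n m l x t"
proof -
  show ?thesis
  proof (cases "m + s \<le> n")
    case True
    then have nle: "\<not> n - m \<le> s - 1" using s by linarith
    have e: "n - m - s = n - m - s" by simp
    have "jacobiJ (n - m) (2 * real m + \<beta> + real CARD('d) - 1) s (1 - 2 * t)
        = (antider ^^ Suc (s - 1)) (jacobiP_hat (n - m - s) (2 * real m + \<beta> + real CARD('d) - 1 + real s) 0) (1 - 2*t)"
      unfolding jacobiJ_def if_not_P[OF nle] by (rule cauchy_formula[OF jacobiP_hat_cont])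
    also have "Suc (s - 1) = s" using s by simp
    finally show ?thesis using True by (simp add: Ef_def S_sob_def)
  next
    case False
    then have "n - m \<le> s - 1" by linarith
    then show ?thesis using False by (simp add: Ef_def S_sob_def jacobiJ_def)
  qed
qed

lemma antider_chain:
  assumes "continuous_on UNIV g"
  shows "((\<lambda>t. (antider ^^ Suc i) g (1 - 2*t)) has_real_derivative (-2) * (antider ^^ i) g (1 - 2*t)) (at t)"
proof -
  have d1: "((\<lambda>t. 1 - 2*t) has_real_derivative (-2)) (at t)"
    by (rule derivative_eq_intros refl)+ simp
  have d2: "(antider ((antider ^^ i) g) has_real_derivative (antider ^^ i) g (1 - 2*t)) (at (1 - 2*t))"
    by (rule antider_deriv[OF antider_pow_cont[OF assms]])
  from DERIV_chain2[OF d2 d1] show ?thesis by (simp add: mult.commute)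
qed

lemma Eder:
  fixes Y :: "nat \<Rightarrow> nat \<Rightarrow> real^'d::finite \<Rightarrow> real"
  assumes "j < s"
  shows "(Ef Y \<beta> s n m l x j has_real_derivative Ef Y \<beta> s n m l x (Suc j) t) (at t)"
proof (cases "m + s \<le> n")
  case True
  define g where "g = jacobiP_hat (n - m - s) (2 * real m + \<beta> + real CARD('d) - 1 + real s) 0"
  have sj: "s - j = Suc (s - Suc j)" using assms by simp
  have "((\<lambda>t. (antider ^^ Suc (s - Suc j)) g (1 - 2*t)) has_real_derivative (-2) * (antider ^^ (s - Suc j)) g (1 - 2*t)) (at t)"
    by (rule antider_chain) (simp add: g_def jacobiP_hat_cont)
  then have "((\<lambda>t. ((-2)^j * Y m l x) * (antider ^^ Suc (s - Suc j)) g (1 - 2*t)) has_real_derivative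
        ((-2)^j * Y m l x) * ((-2) * (antider ^^ (s - Suc j)) g (1 - 2*t))) (at t)"
    by (rule DERIV_cmult)
  then show ?thesis using True unfolding Ef_def g_def[symmetric] sj
    by (simp add: algebra_simps)
next
  case False
  define k where "k = n - m"
  show ?thesis
  proof (cases "j < k")
    case True
    have kj: "k - j = Suc (k - Suc j)" using True by simp
    have "((\<lambda>t. (1 - 2*t + 1)^Suc (k - Suc j)) has_real_derivative
            real (Suc (k - Suc j)) * (1 - 2*t + 1)^(Suc (k - Suc j) - 1) * (0 - 2 * 1 + 0)) (at t)"
    proof -
      have d1: "((\<lambda>t. 1 - 2*t + 1) has_real_derivative (0 - 2 * 1 + 0)) (at t)"
        by (rule derivative_eq_intros refl)+ simp
      have d2: "((\<lambda>z. z ^ Suc (k - Suc j)) has_real_derivative real (Suc (k - Suc j)) * (1 - 2*t + 1) ^ (Suc (k - Suc j) - 1)) (at (1 - 2*t + 1))"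
        using DERIV_pow[of "Suc (k - Suc j)" "1 - 2*t + 1" UNIV] by simp
      from DERIV_chain2[OF d2 d1] show ?thesis .
    qed
    then have "((\<lambda>t. ((-2)^j * Y m l x / fact (Suc (k - Suc j))) * (1 - 2*t + 1)^Suc (k - Suc j)) has_real_derivative
            ((-2)^j * Y m l x / fact (Suc (k - Suc j))) * (real (Suc (k - Suc j)) * (1 - 2*t + 1)^(Suc (k - Suc j) - 1) * (0 - 2 * 1 + 0))) (at t)"
      by (rule DERIV_cmult)
    moreover have "((-2)^j * Y m l x / fact (Suc (k - Suc j))) * (real (Suc (k - Suc j)) * (1 - 2*t + 1)^(Suc (k - Suc j) - 1) * (0 - 2 * 1 + 0))
        = Ef Y \<beta> s n m l x (Suc j) t"
      using False True by (simp add: Ef_def k_def[symmetric] fact_Suc del: of_nat_Suc)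
    moreover have "Ef Y \<beta> s n m l x j = (\<lambda>t. ((-2)^j * Y m l x / fact (Suc (k - Suc j))) * (1 - 2*t + 1)^Suc (k - Suc j))"
      using False True by (simp add: Ef_def k_def[symmetric] kj[symmetric] fun_eq_iff)
    ultimately show ?thesis by simp
  next
    case jk: False
    have "Ef Y \<beta> s n m l x j = (\<lambda>t. (if j = k then (-2)^j * Y m l x else 0))"
      using False jk by (auto simp: Ef_def k_def[symmetric] fun_eq_iff)
    moreover have "Ef Y \<beta> s n m l x (Suc j) t = 0"
      using False jk by (simp add: Ef_def k_def[symmetric])
    ultimately show ?thesis by simp
  qed
qed

lemma Es:
  fixes Y :: "nat \<Rightarrow> nat \<Rightarrow> real^'d::finite \<Rightarrow> real"
  assumes "s \<ge> 1"
  shows "Ef Y \<beta> s n m l x s t = (if m + s \<le> n then (-2)^s * jacobiA (n-m-s) (2 * real m + \<beta> + real CARD('d) - 1 + real s) 0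
      * S_w Y (\<beta> + real s) 0 (n - s) m l x t else 0)"
proof (cases "m + s \<le> n")
  case True
  have e1: "n - s - m = n - m - s" by simp
  have e2: "2 * real m + (\<beta> + real s) + real CARD('d) - 1 = 2 * real m + \<beta> + real CARD('d) - 1 + real s" by simp
  show ?thesis using True unfolding Ef_def S_w_def e1 e2 by (simp add: jacobiP_hat_def)
next
  case False
  then have "\<not> s \<le> n - m" using assms by linarith
  then show ?thesis using False by (simp add: Ef_def)
qed

lemma Ek1:
  fixes Y :: "nat \<Rightarrow> nat \<Rightarrow> real^'d::finite \<Rightarrow> real"
  assumes "k < s" "m + s \<le> n"
  shows "Ef Y \<beta> s n m l x k 1 = 0"
proof -
  have "s - k = Suc (s - Suc k)" using assms by simp
  then show ?thesis using assms by (simp add: Ef_def)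
qed

lemma dtS:
  fixes Y :: "nat \<Rightarrow> nat \<Rightarrow> real^'d::finite \<Rightarrow> real"
  assumes "k \<le> s" "s \<ge> 1"
  shows "dt k (S_sob Y \<beta> s n m l) x = Ef Y \<beta> s n m l x k"
proof -
  have "S_sob Y \<beta> s n m l x = Ef Y \<beta> s n m l x 0" by (rule ext) (rule E0[OF assms(2), symmetric])
  moreover have "\<forall>j<k. \<forall>t. (Ef Y \<beta> s n m l x j has_real_derivative Ef Y \<beta> s n m l x (Suc j) t) (at t)"
    using assms(1) by (auto intro!: Eder)
  ultimately show ?thesis unfolding dt_def
    using deriv_seq[of k "Ef Y \<beta> s n m l x"] by simp
qed



lemma Y_cont:
  fixes Y :: "nat \<Rightarrow> nat \<Rightarrow> real^'d::finite \<Rightarrow> real"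
  assumes "sph_harm_basis N Y" "l < N m"
  shows "continuous_on UNIV (Y m l)"
proof -
  have "hom_poly m (Y m l)" using assms unfolding sph_harm_basis_def by blast
  then obtain cc where cc: "\<forall>x. Y m l x = (\<Sum>\<alpha>\<in>{\<alpha>. sum \<alpha> UNIV = m}. cc \<alpha> * (\<Prod>i\<in>UNIV. (x $ i) ^ \<alpha> i))"
    unfolding hom_poly_def by blast
  have "Y m l = (\<lambda>x. \<Sum>\<alpha>\<in>{\<alpha>. sum \<alpha> UNIV = m}. cc \<alpha> * (\<Prod>i\<in>UNIV. (x $ i) ^ \<alpha> i))"
    using cc by (simp add: fun_eq_iff)
  moreover have "continuous_on UNIV (\<lambda>x::real^'d. \<Sum>\<alpha>\<in>{\<alpha>. sum \<alpha> UNIV = m}. cc \<alpha> * (\<Prod>i\<in>UNIV. (x $ i) ^ \<alpha> i))"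
    by (intro continuous_intros)
  ultimately show ?thesis by simp
qed

lemma Sw_cont:
  fixes Y :: "nat \<Rightarrow> nat \<Rightarrow> real^'d::finite \<Rightarrow> real"
  assumes "sph_harm_basis N Y" "l < N m"
  shows "continuous_on A (\<lambda>y. S_w Y b g n m l y (norm y))"
proof -
  have cY: "continuous_on A (Y m l)" using Y_cont[OF assms] by (rule continuous_on_subset) simp
  show ?thesis unfolding S_w_def jacobiP_def
    by (intro continuous_intros cY) auto
qed

lemma omega_nz: "omega_d TYPE('d::finite) \<noteq> 0"
proof -
  have "real CARD('d) / 2 > 0" by simp
  then have "Gamma (real CARD('d) / 2) > 0" by (rule Gamma_real_pos)
  then show ?thesis by (simp add: omega_d_def less_imp_neq[symmetric])
qed

lemma jacobiA_nz:
  assumes "a > -1" shows "jacobiA n a 0 \<noteq> 0"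
proof -
  have "real n + a + 0 + 1 > 0" using assms by simp
  then have "pochhammer (real n + a + 0 + 1) n > 0" by (rule pochhammer_pos)
  then show ?thesis by (simp add: jacobiA_def)
qed

lemma term_eq:
  fixes Y :: "nat \<Rightarrow> nat \<Rightarrow> real^'d::finite \<Rightarrow> real"
    and f :: "real^'d \<Rightarrow> real \<Rightarrow> real" and U :: "((real^'d) \<times> real) set"
  assumes s1: "s \<ge> 1"
    and beta: "\<beta> > - real CARD('d) - real s"
    and basis: "sph_harm_basis N Y"
    and cone_U: "cone \<subseteq> U"
    and f_cont: "continuous_on U (\<lambda>(x, t). dt s f x t)"
    and ms: "m + s \<le> n" and lN: "l < N m"
  shows "sob_ip \<beta> s lam f (S_sob Y \<beta> s n m l) / sob_ip \<beta> s lam (S_sob Y \<beta> s n m l) (S_sob Y \<beta> s n m l)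
     * ((-2)^s * jacobiA (n-m-s) (2 * real m + \<beta> + real CARD('d) - 1 + real s) 0 * S_w Y (\<beta> + real s) 0 (n - s) m l x t)
   = w_ip (\<beta> + real s) 0 (dt s f) (S_w Y (\<beta> + real s) 0 (n - s) m l)
       / w_ip (\<beta> + real s) 0 (S_w Y (\<beta> + real s) 0 (n - s) m l) (S_w Y (\<beta> + real s) 0 (n - s) m l)
     * S_w Y (\<beta> + real s) 0 (n - s) m l x t"
proof -
  define q where "q = \<beta> + real s"
  define c where "c = (-2)^s * jacobiA (n-m-s) (2 * real m + \<beta> + real CARD('d) - 1 + real s) 0"
  define SS where "SS = S_sob Y \<beta> s n m l"
  define Sw where "Sw = S_w Y q 0 (n - s) m l"
  define \<omega> where "\<omega> = omega_d TYPE('d)"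
  define C where "C = cone_int (\<lambda>(y::real^'d) t. wcone q 0 t)"
  define I1 where "I1 = cone_int (\<lambda>y t. dt s f y t * Sw y t * t powr q)"
  define I2 where "I2 = cone_int (\<lambda>y t. Sw y t * Sw y t * t powr q)"
  have cnz: "c \<noteq> 0" unfolding c_def
    by (simp add: jacobiA_nz) (use beta in \<open>intro jacobiA_nz, simp\<close>)
  have wnz: "\<omega> \<noteq> 0" unfolding \<omega>_def by (rule omega_nz)
  have Cnz: "C \<noteq> 0" unfolding C_def by (rule C_nonzero) (use beta in \<open>simp add: q_def\<close>)
  have dS: "dt s SS = (\<lambda>y t. c * Sw y t)"
  proof (intro ext)
    fix y t
    show "dt s SS y t = c * Sw y t"
      unfolding SS_def dtS[OF order.refl s1] Es[OF s1] using ms by (simp add: c_def Sw_def q_def)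
  qed
  have dk: "dt k SS \<xi> 1 = 0" if "k < s" for k \<xi>
    unfolding SS_def dtS[OF less_imp_le[OF that] s1] by (rule Ek1[OF that ms])
  have sph0: "(\<Sum>k<s. lam k / \<omega> * sphere_int (\<lambda>\<xi>. dt k F \<xi> 1 * dt k SS \<xi> 1)) = 0" for F
    by (intro sum.neutral ballI) (simp add: dk sphere_int_def)
  have sph0': "(\<Sum>k<s. lam k / \<omega> * sphere_int (\<lambda>\<xi>. dt k SS \<xi> 1 * dt k SS \<xi> 1)) = 0"
    by (intro sum.neutral ballI) (simp add: dk sphere_int_def)
  have cmul: "cone_int (\<lambda>y t. a * G y t) = a * cone_int G" for a G
    by (simp add: cone_int_def)
  have sob1: "sob_ip \<beta> s lam f SS = 1 / \<omega> * (c * I1)"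
  proof -
    have "(\<lambda>y t. dt s f y t * dt s SS y t * t powr (\<beta> + real s)) = (\<lambda>y t. c * (dt s f y t * Sw y t * t powr q))"
      by (simp add: dS q_def fun_eq_iff ac_simps)
    then show ?thesis unfolding sob_ip_def sph0 \<omega>_def[symmetric] I1_def
      by (simp add: cmul)
  qed
  have sob2: "sob_ip \<beta> s lam SS SS = 1 / \<omega> * (c * c * I2)"
  proof -
    have "(\<lambda>y t. dt s SS y t * dt s SS y t * t powr (\<beta> + real s)) = (\<lambda>y t. (c * c) * (Sw y t * Sw y t * t powr q))"
      by (simp add: dS q_def fun_eq_iff ac_simps)
    then show ?thesis unfolding sob_ip_def sph0' \<omega>_def[symmetric] I2_def
      by (simp add: cmul)
  qed
  have cSw: "continuous_on (cball 0 1) (\<lambda>y. Sw y (norm y))"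
    unfolding Sw_def by (rule Sw_cont[OF basis lN])
  have cf: "continuous_on (cball 0 1) (\<lambda>y. dt s f y (norm y))"
  proof -
    have "continuous_on (cball (0::real^'d) 1) (\<lambda>y. (\<lambda>(x, t). dt s f x t) (y, norm y))"
    proof (rule continuous_on_compose2[OF f_cont])
      show "continuous_on (cball (0::real^'d) 1) (\<lambda>y. (y, norm y))" by (intro continuous_intros)
      show "(\<lambda>y. (y, norm y)) ` cball (0::real^'d) 1 \<subseteq> U"
        using cone_U by (auto simp: cone_def)
    qed
    then show ?thesis by simp
  qed
  have w1: "w_ip q 0 (dt s f) Sw = 1 / C * I1"
    unfolding w_ip_def C_def[symmetric] I1_def
    using cone_int_wcone[of "\<lambda>y t. dt s f y t * Sw y t" q] cf cSw
    by (simp add: continuous_on_mult)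
  have w2: "w_ip q 0 Sw Sw = 1 / C * I2"
    unfolding w_ip_def C_def[symmetric] I2_def
    using cone_int_wcone[of "\<lambda>y t. Sw y t * Sw y t" q] cSw
    by (simp add: continuous_on_mult)
  have "sob_ip \<beta> s lam f SS / sob_ip \<beta> s lam SS SS * (c * Sw x t)
      = w_ip q 0 (dt s f) Sw / w_ip q 0 Sw Sw * Sw x t"
    unfolding sob1 sob2 w1 w2 using cnz wnz Cnz
    by (cases "I2 = 0") (simp_all add: field_simps)
  then show ?thesis by (simp add: SS_def Sw_def q_def c_def)
qed



theorem mainTheorem6:
  fixes N :: "nat \<Rightarrow> nat" and Y :: "nat \<Rightarrow> nat \<Rightarrow> real^'d::finite \<Rightarrow> real"
    and \<beta> :: real and s :: nat and lam :: "nat \<Rightarrow> real"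
    and f :: "real^'d \<Rightarrow> real \<Rightarrow> real" and U :: "((real^'d) \<times> real) set"
  assumes d2: "CARD('d) \<ge> 2"
    and s1: "s \<ge> 1"
    and beta: "\<beta> > - real CARD('d) - real s"
    and lam_pos: "\<forall>k<s. lam k > 0"
    and basis: "sph_harm_basis N Y"
    and U_open: "open U" and cone_U: "cone \<subseteq> U"
    and f_diff: "\<forall>k<s. \<forall>(x, t)\<in>U. (dt k f x has_real_derivative dt (Suc k) f x t) (at t)"
    and f_cont: "\<forall>k\<le>s. continuous_on U (\<lambda>(x, t). dt k f x t)"
    and f_L2: "set_integrable lborel (cball 0 1)
                 (\<lambda>y::real^'d. (dt s f y (norm y))\<^sup>2 * norm y powr (\<beta> + real s))"
  shows "\<forall>n\<ge>s. \<forall>x t. dt s (proj_sob N Y \<beta> s lam n f) x t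
                     = proj_w N Y (\<beta> + real s) 0 (n - s) (dt s f) x t"
proof (intro allI impI)
  fix n x t assume ns: "n \<ge> s"
  have fc: "continuous_on U (\<lambda>(x, t). dt s f x t)" using f_cont by simp
  define coef where "coef m l = sob_ip \<beta> s lam f (S_sob Y \<beta> s n m l)
       / sob_ip \<beta> s lam (S_sob Y \<beta> s n m l) (S_sob Y \<beta> s n m l)" for m l
  define D where "D j t = (\<Sum>m\<le>n. \<Sum>l<N m. coef m l * Ef Y \<beta> s n m l x j t)" for j t
  have D0: "proj_sob N Y \<beta> s lam n f x = D 0"
    unfolding proj_sob_def D_def coef_def by (simp add: E0[OF s1] fun_eq_iff)
  have Dd: "\<forall>j<s. \<forall>t. (D j has_real_derivative D (Suc j) t) (at t)"
    unfolding D_def by (auto intro!: DERIV_sum DERIV_cmult Eder)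
  have "dt s (proj_sob N Y \<beta> s lam n f) x t = D s t"
    unfolding dt_def D0 deriv_seq[OF Dd] ..
  also have "\<dots> = (\<Sum>m\<le>n. \<Sum>l<N m. coef m l * (if m + s \<le> n then (-2)^s * jacobiA (n-m-s) (2 * real m + \<beta> + real CARD('d) - 1 + real s) 0
      * S_w Y (\<beta> + real s) 0 (n - s) m l x t else 0))"
    unfolding D_def Es[OF s1] ..
  also have "\<dots> = (\<Sum>m\<le>n - s. \<Sum>l<N m. coef m l * ((-2)^s * jacobiA (n-m-s) (2 * real m + \<beta> + real CARD('d) - 1 + real s) 0
      * S_w Y (\<beta> + real s) 0 (n - s) m l x t))"
  proof (rule sum.mono_neutral_cong_right)
    show "\<forall>i\<in>{..n} - {..n - s}. (\<Sum>l<N i. coef i l * (if i + s \<le> n then (-2)^s * jacobiA (n-i-s) (2 * real i + \<beta> + real CARD('d) - 1 + real s) 0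
      * S_w Y (\<beta> + real s) 0 (n - s) i l x t else 0)) = 0"
    proof
      fix i assume "i \<in> {..n} - {..n - s}"
      then have "\<not> i + s \<le> n" by auto
      then show "(\<Sum>l<N i. coef i l * (if i + s \<le> n then (-2)^s * jacobiA (n-i-s) (2 * real i + \<beta> + real CARD('d) - 1 + real s) 0
      * S_w Y (\<beta> + real s) 0 (n - s) i l x t else 0)) = 0" by simp
    qed
    fix i assume "i \<in> {..n - s}"
    then have "i + s \<le> n" using ns by auto
    then show "(\<Sum>l<N i. coef i l * (if i + s \<le> n then (-2)^s * jacobiA (n-i-s) (2 * real i + \<beta> + real CARD('d) - 1 + real s) 0
      * S_w Y (\<beta> + real s) 0 (n - s) i l x t else 0)) = (\<Sum>l<N i. coef i l * ((-2)^s * jacobiA (n-i-s) (2 * real i + \<beta> + real CARD('d) - 1 + real s) 0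
      * S_w Y (\<beta> + real s) 0 (n - s) i l x t))" by simp
  qed auto
  also have "\<dots> = (\<Sum>m\<le>n - s. \<Sum>l<N m. w_ip (\<beta> + real s) 0 (dt s f) (S_w Y (\<beta> + real s) 0 (n - s) m l)
       / w_ip (\<beta> + real s) 0 (S_w Y (\<beta> + real s) 0 (n - s) m l) (S_w Y (\<beta> + real s) 0 (n - s) m l)
     * S_w Y (\<beta> + real s) 0 (n - s) m l x t)"
  proof (intro sum.cong refl)
    fix m l assume m: "m \<in> {..n - s}" and l: "l \<in> {..<N m}"
    have "m + s \<le> n" using m ns by auto
    then show "coef m l * ((-2)^s * jacobiA (n-m-s) (2 * real m + \<beta> + real CARD('d) - 1 + real s) 0
      * S_w Y (\<beta> + real s) 0 (n - s) m l x t) = w_ip (\<beta> + real s) 0 (dt s f) (S_w Y (\<beta> + real s) 0 (n - s) m l)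
       / w_ip (\<beta> + real s) 0 (S_w Y (\<beta> + real s) 0 (n - s) m l) (S_w Y (\<beta> + real s) 0 (n - s) m l)
     * S_w Y (\<beta> + real s) 0 (n - s) m l x t"
      unfolding coef_def using term_eq[OF s1 beta basis cone_U fc _ ] l by simp
  qed
  also have "\<dots> = proj_w N Y (\<beta> + real s) 0 (n - s) (dt s f) x t"
    unfolding proj_w_def ..
  finally show "dt s (proj_sob N Y \<beta> s lam n f) x t = proj_w N Y (\<beta> + real s) 0 (n - s) (dt s f) x t" .
qed


end
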